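(* Let $a,b$ be positive integers with $a\ge b$ such that either $b\ge 2$, or $b=1$ and $a\ge 5$, and let $A=\begin{pmatrix}2&-a\\-b&2\end{pmatrix}$. Then every $\pi$-system $\Sigma\subseteq\Delta^+_{\mathrm{re}}$ of $\mathfrak g(A)$ satisfies $|\Sigma|\le 2$. If $|\Sigma|=2$, then $\Sigma=\{\beta_1^j,\beta_2^k\}$ for some $j,k\in\mathbb Z_+$; in particular $\Sigma$ is linearly independent. Conversely: (1) if $b\ge 2$, then $\{\beta_1^j,\beta_2^k\}$ is a $\pi$-system for all $j,k\in\mathbb Z_+$; (2) if $b=1$ and $a\ge 5$, then $\{\beta_1^j,\beta_2^k\}$ is a $\pi$-system if and only if $(j,k)\neq(1,0)$.
   Context: Let $\mathfrak g(A)$ be the Kac–Moody algebra of the generalized Cartan matrix $A=\begin{pmatrix}2&-a\\-b&2\end{pmatrix}$, with simple roots $\alpha_1,\alpha_2$, root system $\Delta$, set of real roots $\Delta_{\mathrm{re}}$ and positive real roots $\Delta^+_{\mathrm{re}}$. $\mathbb Z_+=\{0,1,2,\dots\}$. Define integers $c_j,d_j$ ($j\in\mathbb Z_+$) by $c_0=d_0=0$, $c_1=d_1=1$, $c_{k+2}+c_k=a\,d_{k+1}$, $d_{k+2}+d_k=b\,c_{k+1}$. For $j\in\mathbb Z_+$ set $\beta_1^j=c_j\alpha_1+d_{j+1}\alpha_2$ and $\beta_2^j=c_{j+1}\alpha_1+d_j\alpha_2$; then $\Delta^+_{\mathrm{re}}=\{\beta_1^j,\beta_2^j: j\in\mathbb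 Z_+\}$. A subset $\Sigma\subseteq\Delta_{\mathrm{re}}$ is called a $\pi$-system if $\alpha-\beta\notin\Delta$ for all $\alpha,\beta\in\Sigma$ (here $0\notin\Delta$). *)

theory Defs
  imports Complex_Main
begin

text \<open>Rank-2 Kac-Moody root data for A = [[2,-a],[-b,2]].
  An element m alpha_1 + n alpha_2 of the root lattice is the pair (m,n) :: int * int.\<close>

type_synonym rlat = "int \<times> int"

definition rdiff :: "rlat \<Rightarrow> rlat \<Rightarrow> rlat" where
  "rdiff x y = (fst x - fst y, snd x - snd y)"

definition rneg :: "rlat \<Rightarrow> rlat" where
  "rneg x = (- fst x, - snd x)"

text \<open>Pairings with simple coroots: alpha_j(h_i) = a_ij.\<close>
definition pair1 :: "int \<Rightarrow> int \<Rightarrow> rlat \<Rightarrow> int" where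
  "pair1 a b x = 2 * fst x - a * snd x"
definition pair2 :: "int \<Rightarrow> int \<Rightarrow> rlat \<Rightarrow> int" where
  "pair2 a b x = - b * fst x + 2 * snd x"

definition refl1 :: "int \<Rightarrow> int \<Rightarrow> rlat \<Rightarrow> rlat" where
  "refl1 a b x = (fst x - pair1 a b x, snd x)"
definition refl2 :: "int \<Rightarrow> int \<Rightarrow> rlat \<Rightarrow> rlat" where
  "refl2 a b x = (fst x, snd x - pair2 a b x)"

text \<open>Weyl group orbit W . S (W generated by the simple reflections, which are involutions).\<close>
inductive_set worbit :: "int \<Rightarrow> int \<Rightarrow> rlat set \<Rightarrow> rlat set" for a b S where
  base: "x \<in> S \<Longrightarrow> x \<in> worbit a b S"
| r1: "x \<in> worbit a b S \<Longrightarrow> refl1 a b x \<in> worbit a b S"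
| r2: "x \<in> worbit a b S \<Longrightarrow> refl2 a b x \<in> worbit a b S"

text \<open>Real roots: W . Pi (Kac, Prop. 5.1).\<close>
definition real_roots :: "int \<Rightarrow> int \<Rightarrow> rlat set" where
  "real_roots a b = worbit a b {(1,0), (0,1)}"

definition pos_real_roots :: "int \<Rightarrow> int \<Rightarrow> rlat set" where
  "pos_real_roots a b = {x \<in> real_roots a b. fst x \<ge> 0 \<and> snd x \<ge> 0}"

text \<open>Fundamental set K (Kac, Thm 5.4): nonzero alpha in Q_+ with connected support
  and alpha(h_i) \<le> 0 for i = 1,2.  The support of a nonzero element is connected iff it is
  a single node or the two nodes are joined (a \<noteq> 0).\<close>
definition Kset :: "int \<Rightarrow> int \<Rightarrow> rlat set" where
  "Kset a b = {x. fst x \<ge> 0 \<and> snd x \<ge> 0 \<and> x \<noteq> (0,0) \<and>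
                  (fst x = 0 \<or> snd x = 0 \<or> a \<noteq> 0) \<and>
                  pair1 a b x \<le> 0 \<and> pair2 a b x \<le> 0}"

definition pos_imag_roots :: "int \<Rightarrow> int \<Rightarrow> rlat set" where
  "pos_imag_roots a b = worbit a b (Kset a b)"

definition imag_roots :: "int \<Rightarrow> int \<Rightarrow> rlat set" where
  "imag_roots a b = pos_imag_roots a b \<union> rneg ` pos_imag_roots a b"

definition roots :: "int \<Rightarrow> int \<Rightarrow> rlat set" where
  "roots a b = real_roots a b \<union> imag_roots a b"

definition pi_system :: "int \<Rightarrow> int \<Rightarrow> rlat set \<Rightarrow> bool" where
  "pi_system a b S \<longleftrightarrow> S \<subseteq> real_roots a b \<and>
     (\<forall>x\<in>S. \<forall>y\<in>S. rdiff x y \<notin> roots a b)"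

fun cd :: "int \<Rightarrow> int \<Rightarrow> nat \<Rightarrow> int \<times> int" where
  "cd a b 0 = (0, 0)"
| "cd a b (Suc 0) = (1, 1)"
| "cd a b (Suc (Suc k)) =
     (a * snd (cd a b (Suc k)) - fst (cd a b k), b * fst (cd a b (Suc k)) - snd (cd a b k))"

definition cseq :: "int \<Rightarrow> int \<Rightarrow> nat \<Rightarrow> int" where "cseq a b k = fst (cd a b k)"
definition dseq :: "int \<Rightarrow> int \<Rightarrow> nat \<Rightarrow> int" where "dseq a b k = snd (cd a b k)"

definition beta1 :: "int \<Rightarrow> int \<Rightarrow> nat \<Rightarrow> rlat" where
  "beta1 a b j = (cseq a b j, dseq a b (j + 1))"
definition beta2 :: "int \<Rightarrow> int \<Rightarrow> nat \<Rightarrow> rlat" where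
  "beta2 a b j = (cseq a b (j + 1), dseq a b j)"

definition lin_indep :: "rlat set \<Rightarrow> bool" where
  "lin_indep S \<longleftrightarrow> finite S \<and> (\<forall>u :: rlat \<Rightarrow> real.
      (\<Sum>v\<in>S. u v * real_of_int (fst v)) = 0 \<and> (\<Sum>v\<in>S. u v * real_of_int (snd v)) = 0
      \<longrightarrow> (\<forall>v\<in>S. u v = 0))"

end

theory Submission
  imports Defs
begin



definition qf :: "int \<Rightarrow> int \<Rightarrow> rlat \<Rightarrow> int" where
  "qf a b x = b * (fst x)^2 - a * b * fst x * snd x + a * (snd x)^2"

definition det2 :: "rlat \<Rightarrow> rlat \<Rightarrow> int" where
  "det2 x y = fst x * snd y - snd x * fst y"

lemma refl1_invol[simp]: "refl1 a b (refl1 a b x) = x"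
  by (cases x) (simp add: refl1_def pair1_def)
lemma refl2_invol[simp]: "refl2 a b (refl2 a b x) = x"
  by (cases x) (simp add: refl2_def pair2_def)
lemma qf_refl1[simp]: "qf a b (refl1 a b x) = qf a b x"
  by (cases x) (simp add: qf_def refl1_def pair1_def power2_eq_square algebra_simps)
lemma qf_refl2[simp]: "qf a b (refl2 a b x) = qf a b x"
  by (cases x) (simp add: qf_def refl2_def pair2_def power2_eq_square algebra_simps)
lemma qf_rneg[simp]: "qf a b (rneg x) = qf a b x"
  by (simp add: qf_def rneg_def)
lemma rneg_rneg[simp]: "rneg (rneg x) = x" by (simp add: rneg_def)
lemma qf_rdiff_swap: "qf a b (rdiff x y) = qf a b (rdiff y x)"
  by (simp add: qf_def rdiff_def power2_eq_square algebra_simps)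
lemma refl1_rdiff: "refl1 a b (rdiff x y) = rdiff (refl1 a b x) (refl1 a b y)"
  by (simp add: refl1_def rdiff_def pair1_def algebra_simps)
lemma refl2_rdiff: "refl2 a b (rdiff x y) = rdiff (refl2 a b x) (refl2 a b y)"
  by (simp add: refl2_def rdiff_def pair2_def algebra_simps)
lemma refl1_rneg: "refl1 a b (rneg x) = rneg (refl1 a b x)"
  by (simp add: refl1_def rneg_def pair1_def algebra_simps)
lemma refl2_rneg: "refl2 a b (rneg x) = rneg (refl2 a b x)"
  by (simp add: refl2_def rneg_def pair2_def algebra_simps)
lemma det2_refl1: "det2 (refl1 a b x) (refl1 a b y) = - det2 x y"
  by (simp add: det2_def refl1_def pair1_def algebra_simps)
lemma det2_refl2: "det2 (refl2 a b x) (refl2 a b y) = - det2 x y"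
  by (simp add: det2_def refl2_def pair2_def algebra_simps)
lemma rneg_rdiff: "rneg (rdiff x y) = rdiff y x" by (simp add: rneg_def rdiff_def)

lemma qf_sub1: "qf a b (rdiff x (1,0)) = qf a b x + b - b * pair1 a b x"
  by (simp add: qf_def rdiff_def pair1_def power2_eq_square algebra_simps)
lemma qf_sub2: "qf a b (rdiff x (0,1)) = qf a b x + a - a * pair2 a b x"
  by (simp add: qf_def rdiff_def pair2_def power2_eq_square algebra_simps)

lemma worbit_rneg_closed:
  assumes "x \<in> worbit a b S" "\<And>y. y \<in> S \<Longrightarrow> rneg y \<in> worbit a b S"
  shows "rneg x \<in> worbit a b S"
  using assms(1)
proof induction
  case (base x) then show ?case using assms(2) by blast
next
  case (r1 x) then show ?case by (metis refl1_rneg worbit.r1)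
next
  case (r2 x) then show ?case by (metis refl2_rneg worbit.r2)
qed

lemma real_roots_rneg: "x \<in> real_roots a b \<Longrightarrow> rneg x \<in> real_roots a b"
  unfolding real_roots_def
proof (erule worbit_rneg_closed)
  fix y assume "y \<in> {(1::int, 0::int), (0, 1)}"
  then show "rneg y \<in> worbit a b {(1, 0), (0, 1)}"
  proof
    assume "y = (1,0)"
    then have "rneg y = refl1 a b (1,0)" by (simp add: rneg_def refl1_def pair1_def)
    then show ?thesis by (simp add: worbit.base worbit.r1)
  next
    assume "y \<in> {(0,1)}"
    then have "rneg y = refl2 a b (0,1)" by (simp add: rneg_def refl2_def pair2_def)
    then show ?thesis by (simp add: worbit.base worbit.r2)
  qed
qed

lemma roots_rneg: "x \<in> roots a b \<Longrightarrow> rneg x \<in> roots a b"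
proof -
  assume "x \<in> roots a b"
  then consider "x \<in> real_roots a b" | "x \<in> pos_imag_roots a b" | y where "y \<in> pos_imag_roots a b" "x = rneg y"
    unfolding roots_def imag_roots_def by blast
  then show ?thesis
  proof cases
    case 1 then show ?thesis using real_roots_rneg unfolding roots_def by blast
  next
    case 2 then show ?thesis unfolding roots_def imag_roots_def by blast
  next
    case 3 then show ?thesis unfolding roots_def imag_roots_def by simp
  qed
qed

lemma roots_refl1: "x \<in> roots a b \<Longrightarrow> refl1 a b x \<in> roots a b"
  unfolding roots_def imag_roots_def real_roots_def pos_imag_roots_def
  by (auto intro: worbit.r1 simp: refl1_rneg)

lemma roots_refl2: "x \<in> roots a b \<Longrightarrow> refl2 a b x \<in> roots a b"
  unfolding roots_def imag_roots_def real_roots_def pos_imag_roots_def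
  by (auto intro: worbit.r2 simp: refl2_rneg)

lemma roots_refl1_iff: "refl1 a b x \<in> roots a b \<longleftrightarrow> x \<in> roots a b"
  by (metis refl1_invol roots_refl1)
lemma roots_refl2_iff: "refl2 a b x \<in> roots a b \<longleftrightarrow> x \<in> roots a b"
  by (metis refl2_invol roots_refl2)
lemma roots_rneg_iff: "rneg x \<in> roots a b \<longleftrightarrow> x \<in> roots a b"
  by (metis rneg_rneg roots_rneg)

lemma worbit_inv:
  assumes "x \<in> worbit a b S" "\<And>y. y \<in> S \<Longrightarrow> P y"
    "\<And>y. P y \<Longrightarrow> P (refl1 a b y)" "\<And>y. P y \<Longrightarrow> P (refl2 a b y)"
  shows "P x"
  using assms(1) by induction (use assms in auto)

lemma Kset_qf:
  assumes "a \<ge> 0" "b \<ge> 0" "x \<in> Kset a b" shows "qf a b x \<le> 0"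
proof -
  obtain m n where x: "x = (m,n)" by (cases x)
  have m: "m \<ge> 0" and n: "n \<ge> 0" and p1: "2*m - a*n \<le> 0" and p2: "-b*m + 2*n \<le> 0"
    using assms(3) by (auto simp: Kset_def x pair1_def pair2_def)
  have "2 * qf a b x = b*m*(2*m - a*n) + a*n*(-b*m + 2*n)"
    by (simp add: qf_def x power2_eq_square algebra_simps)
  moreover have "b*m*(2*m - a*n) \<le> 0"
    using assms(2) m p1 by (simp add: mult_nonneg_nonpos)
  moreover have "a*n*(-b*m + 2*n) \<le> 0"
    using assms(1) n p2 by (simp add: mult_nonneg_nonpos)
  ultimately show ?thesis by linarith
qed

lemma refl1_zero: "refl1 a b y = (0,0) \<longleftrightarrow> y = (0,0)"
  by (cases y) (auto simp: refl1_def pair1_def)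
lemma refl2_zero: "refl2 a b y = (0,0) \<longleftrightarrow> y = (0,0)"
  by (cases y) (auto simp: refl2_def pair2_def)

lemma roots_props:
  assumes "a \<ge> 0" "b \<ge> 0" "x \<in> roots a b"
  shows "x \<noteq> (0,0) \<and> (qf a b x \<le> 0 \<or> qf a b x = a \<or> qf a b x = b)"
proof -
  let ?P = "\<lambda>x. x \<noteq> (0,0) \<and> (qf a b x \<le> 0 \<or> qf a b x = a \<or> qf a b x = b)"
  have r: "?P x" if "x \<in> real_roots a b" for x
    using that unfolding real_roots_def
  proof (rule worbit_inv)
    fix y assume "y \<in> {(1::int,0::int),(0,1)}" then show "?P y" by (auto simp: qf_def)
  qed (simp_all add: refl1_zero refl2_zero)
  have i: "?P x" if "x \<in> pos_imag_roots a b" for x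
    using that unfolding pos_imag_roots_def
  proof (rule worbit_inv)
    fix y assume "y \<in> Kset a b" then show "?P y" using Kset_qf[OF assms(1,2)] by (auto simp: Kset_def)
  qed (simp_all add: refl1_zero refl2_zero)
  have n: "rneg y \<noteq> (0,0)" if "y \<noteq> (0,0)" for y using that by (simp add: rneg_def prod_eq_iff)
  from assms(3) consider "x \<in> real_roots a b" | "x \<in> pos_imag_roots a b" | y where "y \<in> pos_imag_roots a b" "x = rneg y"
    unfolding roots_def imag_roots_def by blast
  then show ?thesis
  proof cases
    case 1 then show ?thesis using r by blast
  next
    case 2 then show ?thesis using i by blast
  next
    case 3 then show ?thesis using i[of y] n[of y] by simp
  qed
qed




lemma sign_lemma:
  fixes a b m n :: int
  assumes "a \<ge> 1" "b \<ge> 1" "qf a b (m,n) \<le> 0" "(m,n) \<noteq> (0,0)"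
  shows "(m > 0 \<and> n > 0) \<or> (m < 0 \<and> n < 0)"
proof (rule ccontr)
  assume c: "\<not> ?thesis"
  then have mn: "m * n \<le> 0" by (auto simp: mult_le_0_iff)
  have "a * b * (m * n) \<le> 0" using mn assms(1,2) by (simp add: mult_nonneg_nonpos)
  moreover have "b * m^2 \<ge> 0" "a * n^2 \<ge> 0" using assms(1,2) by auto
  moreover have "b * m^2 > 0 \<or> a * n^2 > 0" using assms(1,2,4) by auto
  ultimately have "qf a b (m,n) > 0" unfolding qf_def by (simp add: algebra_simps) linarith
  then show False using assms(3) by simp
qed

lemma pos_in_worbit:
  fixes a b :: int
  assumes "a \<ge> 1" "b \<ge> 1"
  shows "m > 0 \<Longrightarrow> n > 0 \<Longrightarrow> qf a b (m,n) \<le> 0 \<Longrightarrow> (m,n) \<in> worbit a b (Kset a b)"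
proof (induction "nat (m+n)" arbitrary: m n rule: less_induct)
  case less
  show ?case
  proof (cases "pair1 a b (m,n) > 0")
    case True
    let ?y = "refl1 a b (m,n)"
    have y: "?y = (m - pair1 a b (m,n), n)" by (simp add: refl1_def)
    have qy: "qf a b ?y \<le> 0" using less by simp
    have "fst ?y > 0"
      using sign_lemma[OF assms, of "fst ?y" "snd ?y"] qy less(3) y by auto
    then have "?y \<in> worbit a b (Kset a b)"
      using less(1)[of "fst ?y" "snd ?y"] qy less(2,3) True y by auto
    then have "refl1 a b ?y \<in> worbit a b (Kset a b)" by (rule worbit.r1)
    then show ?thesis by simp
  next
    case F1: False
    show ?thesis
    proof (cases "pair2 a b (m,n) > 0")
      case True
      let ?y = "refl2 a b (m,n)"
      have y: "?y = (m, n - pair2 a b (m,n))" by (simp add: refl2_def)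
      have qy: "qf a b ?y \<le> 0" using less by simp
      have "snd ?y > 0"
        using sign_lemma[OF assms, of "fst ?y" "snd ?y"] qy less(2) y by auto
      then have "?y \<in> worbit a b (Kset a b)"
        using less(1)[of "fst ?y" "snd ?y"] qy less(2,3) True y by auto
      then have "refl2 a b ?y \<in> worbit a b (Kset a b)" by (rule worbit.r2)
      then show ?thesis by simp
    next
      case False
      then have "(m,n) \<in> Kset a b" using F1 less(2,3) assms by (auto simp: Kset_def)
      then show ?thesis by (rule worbit.base)
    qed
  qed
qed

lemma qf_nonpos_root:
  fixes a b :: int
  assumes "a \<ge> 1" "b \<ge> 1" "qf a b x \<le> 0" "x \<noteq> (0,0)"
  shows "x \<in> roots a b"
proof -
  obtain m n where x: "x = (m,n)" by (cases x)
  from sign_lemma[OF assms(1,2), of m n] assms(3,4) x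
  have "(m > 0 \<and> n > 0) \<or> (m < 0 \<and> n < 0)" by simp
  then show ?thesis
  proof
    assume "m > 0 \<and> n > 0"
    then have "x \<in> pos_imag_roots a b" using pos_in_worbit[OF assms(1,2), of m n] assms(3) x
      by (simp add: pos_imag_roots_def)
    then show ?thesis by (simp add: roots_def imag_roots_def)
  next
    assume "m < 0 \<and> n < 0"
    then have "rneg x \<in> pos_imag_roots a b" using pos_in_worbit[OF assms(1,2), of "-m" "-n"] assms(3) x
      by (simp add: pos_imag_roots_def rneg_def qf_def)
    then have "rneg x \<in> roots a b" by (simp add: roots_def imag_roots_def)
    then show ?thesis by (simp add: roots_rneg_iff)
  qed
qed




fun ss :: "int \<Rightarrow> int \<Rightarrow> nat \<Rightarrow> int" where
  "ss a b 0 = 0"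
| "ss a b (Suc 0) = 1"
| "ss a b (Suc (Suc k)) = (if even k then ss a b (Suc k) - ss a b k else a * b * ss a b (Suc k) - ss a b k)"

lemma cd_ss: "cd a b k = (if even k then (a * ss a b k, b * ss a b k) else (ss a b k, ss a b k))"
  by (induction a b k rule: cd.induct) (auto simp: algebra_simps)

lemma cseq_ss: "cseq a b k = (if even k then a * ss a b k else ss a b k)"
  by (simp add: cseq_def cd_ss)
lemma dseq_ss: "dseq a b k = (if even k then b * ss a b k else ss a b k)"
  by (simp add: dseq_def cd_ss)

lemma R1: "cseq a b (Suc (Suc k)) = a * dseq a b (Suc k) - cseq a b k"
  by (simp add: cseq_def dseq_def)
lemma R2: "dseq a b (Suc (Suc k)) = b * cseq a b (Suc k) - dseq a b k"
  by (simp add: cseq_def dseq_def)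

lemma ss_inv:
  assumes ab: "a * b \<ge> 4"
  shows "ss a b k \<ge> 0 \<and> (even k \<longrightarrow> ss a b (Suc k) \<ge> 2 * ss a b k + 1)
         \<and> (odd k \<longrightarrow> 2 * ss a b (Suc k) \<ge> ss a b k + 1 \<and> ss a b k \<ge> 1)"
proof (induction k)
  case 0 then show ?case by simp
next
  case (Suc k)
  show ?case
  proof (cases "even k")
    case True
    then show ?thesis using Suc by auto
  next
    case False
    have t: "ss a b (Suc k) \<ge> 1" using Suc False by auto
    have m: "a * b * ss a b (Suc k) \<ge> 4 * ss a b (Suc k)"
      using ab t by (intro mult_right_mono) auto
    have eq: "ss a b (Suc (Suc k)) = a * b * ss a b (Suc k) - ss a b k" using False by simp
    have "ss a b (Suc (Suc k)) \<ge> 2 * ss a b (Suc k) + 1" using m eq Suc False by linarith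
    then show ?thesis using Suc False t by auto
  qed
qed

lemma ss_nonneg: "a * b \<ge> 4 \<Longrightarrow> ss a b k \<ge> 0" using ss_inv by blast
lemma ss_pos: "a * b \<ge> 4 \<Longrightarrow> k \<ge> 1 \<Longrightarrow> ss a b k \<ge> 1"
proof -
  assume ab: "a * b \<ge> 4" and k: "k \<ge> 1"
  then obtain p where p: "k = Suc p" by (cases k) auto
  show ?thesis
  proof (cases "even p")
    case True then show ?thesis using ss_inv[OF ab, of p] p by auto
  next
    case False then show ?thesis using ss_inv[OF ab, of p] p by auto
  qed
qed
lemma ss_even_step: "a * b \<ge> 4 \<Longrightarrow> even k \<Longrightarrow> ss a b (Suc k) \<ge> 2 * ss a b k + 1"
  using ss_inv by blast
lemma ss_odd_step: "a * b \<ge> 4 \<Longrightarrow> odd k \<Longrightarrow> 2 * ss a b (Suc k) \<ge> ss a b k + 1"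
  using ss_inv by blast

lemma ss_D_odd:
  assumes ab: "a * b \<ge> 4" and p: "odd p"
  shows "ss a b (Suc (Suc p)) - ss a b p \<ge> 2"
proof -
  have t: "ss a b (Suc p) \<ge> 0" using ss_nonneg[OF ab] .
  have "a * b * ss a b (Suc p) \<ge> 4 * ss a b (Suc p)"
    using ab t by (intro mult_right_mono) auto
  then show ?thesis using ss_odd_step[OF ab p] p by simp
qed

lemma ss_D_gen:
  assumes ab: "a * b \<ge> 4"
  shows "ss a b (Suc (Suc p)) - ss a b p \<ge> 1"
proof (cases "even p")
  case True then show ?thesis using ss_even_step[OF ab True] by simp
next
  case False then show ?thesis using ss_D_odd[OF ab] by fastforce
qed

lemma ss_D_even:
  assumes ab: "a * b \<ge> 5" and p: "even p" "p \<ge> 2"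
  shows "ss a b (Suc (Suc p)) - ss a b p \<ge> 2"
proof -
  obtain q where q: "p = Suc q" using p by (cases p) auto
  have qo: "odd q" using p q by simp
  have t: "ss a b p \<ge> 1" using ss_pos[of a b p] ab p by simp
  have "a * b * ss a b p \<ge> 5 * ss a b p"
    using ab t by (intro mult_right_mono) auto
  moreover have "ss a b (Suc p) = a * b * ss a b p - ss a b q" using q qo by simp
  moreover have "2 * ss a b p \<ge> ss a b q + 1" using ss_odd_step[of a b q] ab qo q by simp
  ultimately show ?thesis using p t by (simp only: ss.simps(3) if_P)
qed

lemma ss_ge2: "a * b \<ge> 5 \<Longrightarrow> k \<ge> 3 \<Longrightarrow> ss a b k \<ge> 2"
proof (induction k rule: less_induct)
  case (less k)
  show ?case
  proof (cases "k \<le> 4")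
    case True
    then have "k = 3 \<or> k = 4" using less by auto
    then show ?thesis using less(2) by (auto simp: numeral_eq_Suc)
  next
    case False
    then obtain p where p: "k = Suc (Suc p)" "p \<ge> 3" by (cases k; cases "k - 1") auto
    then have "ss a b p \<ge> 2" using less by auto
    moreover have "ss a b (Suc (Suc p)) - ss a b p \<ge> 1" using ss_D_gen[of a b p] less(2) by simp
    ultimately show ?thesis using p by simp
  qed
qed




lemma beta1_0: "beta1 a b 0 = (0,1)" by (simp add: beta1_def cseq_def dseq_def)
lemma beta2_0: "beta2 a b 0 = (1,0)" by (simp add: beta2_def cseq_def dseq_def)

lemma beta_r1: "refl1 a b (beta1 a b j) = beta2 a b (Suc j)"
  by (simp add: refl1_def beta1_def beta2_def pair1_def R1)
lemma beta_r2: "refl2 a b (beta2 a b k) = beta1 a b (Suc k)"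
  by (simp add: refl2_def beta1_def beta2_def pair2_def R2)
lemma beta_r1': "refl1 a b (beta2 a b (Suc k)) = beta1 a b k"
  by (metis beta_r1 refl1_invol)
lemma beta_r2': "refl2 a b (beta1 a b (Suc j)) = beta2 a b j"
  by (metis beta_r2 refl2_invol)
lemma beta_r1_0: "refl1 a b (beta2 a b 0) = rneg (beta2 a b 0)"
  by (simp add: beta2_0 refl1_def pair1_def rneg_def)
lemma beta_r2_0: "refl2 a b (beta1 a b 0) = rneg (beta1 a b 0)"
  by (simp add: beta1_0 refl2_def pair2_def rneg_def)

lemma qf_beta: "qf a b (beta1 a b n) = (if even n then a else b) \<and> qf a b (beta2 a b n) = (if even n then b else a)"
proof (induction n)
  case 0 then show ?case by (simp add: beta1_0 beta2_0 qf_def)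
next
  case (Suc n)
  have "qf a b (beta2 a b (Suc n)) = qf a b (beta1 a b n)" by (metis beta_r1 qf_refl1)
  moreover have "qf a b (beta1 a b (Suc n)) = qf a b (beta2 a b n)" by (metis beta_r2 qf_refl2)
  ultimately show ?case using Suc by simp
qed

lemma beta_real: "beta1 a b j \<in> real_roots a b \<and> beta2 a b j \<in> real_roots a b"
proof (induction j)
  case 0 then show ?case by (simp add: beta1_0 beta2_0 real_roots_def worbit.base)
next
  case (Suc j)
  then show ?case unfolding real_roots_def by (metis beta_r1 beta_r2 worbit.r1 worbit.r2)
qed

lemma real_roots_char:
  assumes "x \<in> real_roots a b"
  shows "\<exists>j. x = beta1 a b j \<or> x = beta2 a b j \<or> x = rneg (beta1 a b j) \<or> x = rneg (beta2 a b j)"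
  using assms unfolding real_roots_def
proof (rule worbit_inv)
  fix y :: rlat assume "y \<in> {(1,0),(0,1)}"
  then show "\<exists>j. y = beta1 a b j \<or> y = beta2 a b j \<or> y = rneg (beta1 a b j) \<or> y = rneg (beta2 a b j)"
    by (metis beta1_0 beta2_0 empty_iff insert_iff)
next
  fix y assume "\<exists>j. y = beta1 a b j \<or> y = beta2 a b j \<or> y = rneg (beta1 a b j) \<or> y = rneg (beta2 a b j)"
  then obtain j where j: "y = beta1 a b j \<or> y = beta2 a b j \<or> y = rneg (beta1 a b j) \<or> y = rneg (beta2 a b j)" by blast
  show "\<exists>j. refl1 a b y = beta1 a b j \<or> refl1 a b y = beta2 a b j \<or> refl1 a b y = rneg (beta1 a b j) \<or> refl1 a b y = rneg (beta2 a b j)"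
  proof (cases j)
    case 0 then show ?thesis using j by (metis beta_r1 beta_r1_0 refl1_rneg rneg_rneg)
  next
    case (Suc i) then show ?thesis using j by (metis beta_r1 beta_r1' refl1_rneg)
  qed
next
  fix y assume "\<exists>j. y = beta1 a b j \<or> y = beta2 a b j \<or> y = rneg (beta1 a b j) \<or> y = rneg (beta2 a b j)"
  then obtain j where j: "y = beta1 a b j \<or> y = beta2 a b j \<or> y = rneg (beta1 a b j) \<or> y = rneg (beta2 a b j)" by blast
  show "\<exists>j. refl2 a b y = beta1 a b j \<or> refl2 a b y = beta2 a b j \<or> refl2 a b y = rneg (beta1 a b j) \<or> refl2 a b y = rneg (beta2 a b j)"
  proof (cases j)
    case 0 then show ?thesis using j by (metis beta_r2 beta_r2_0 refl2_rneg rneg_rneg)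
  next
    case (Suc i) then show ?thesis using j by (metis beta_r2 beta_r2' refl2_rneg)
  qed
qed

lemma cseq_pos: "a \<ge> 1 \<Longrightarrow> a * b \<ge> 4 \<Longrightarrow> k \<ge> 1 \<Longrightarrow> cseq a b k \<ge> 1"
proof -
  assume h: "a \<ge> 1" "a * b \<ge> 4" "k \<ge> 1"
  have s: "ss a b k \<ge> 1" using ss_pos h by blast
  have "a * ss a b k \<ge> 1 * 1" using h(1) s by (intro mult_mono) auto
  then show ?thesis using s by (simp add: cseq_ss)
qed
lemma dseq_pos: "b \<ge> 1 \<Longrightarrow> a * b \<ge> 4 \<Longrightarrow> k \<ge> 1 \<Longrightarrow> dseq a b k \<ge> 1"
proof -
  assume h: "b \<ge> 1" "a * b \<ge> 4" "k \<ge> 1"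
  have s: "ss a b k \<ge> 1" using ss_pos h by blast
  have "b * ss a b k \<ge> 1 * 1" using h(1) s by (intro mult_mono) auto
  then show ?thesis using s by (simp add: dseq_ss)
qed

lemma pos_real_char:
  assumes "a \<ge> 1" "b \<ge> 1" "a * b \<ge> 4" "x \<in> pos_real_roots a b"
  shows "\<exists>j. x = beta1 a b j \<or> x = beta2 a b j"
proof -
  from assms(4) have x: "x \<in> real_roots a b" "fst x \<ge> 0" "snd x \<ge> 0" by (auto simp: pos_real_roots_def)
  obtain j where j: "x = beta1 a b j \<or> x = beta2 a b j \<or> x = rneg (beta1 a b j) \<or> x = rneg (beta2 a b j)"
    using real_roots_char[OF x(1)] by blast
  have "dseq a b (j+1) \<ge> 1" "cseq a b (j+1) \<ge> 1" using cseq_pos dseq_pos assms by auto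
  then have "x \<noteq> rneg (beta1 a b j)" "x \<noteq> rneg (beta2 a b j)" using x(2,3)
    by (auto simp: rneg_def beta1_def beta2_def)
  then show ?thesis using j by blast
qed




locale hyp =
  fixes a b :: int
  assumes a1: "a \<ge> 1" and b1: "b \<ge> 1" and ba: "b \<le> a" and b2a5: "b \<ge> 2 \<or> a \<ge> 5"
begin

lemma ab4: "a * b \<ge> 4"
proof (cases "b \<ge> 2")
  case True
  have "a * b \<ge> 2 * 2" using True ba by (intro mult_mono) auto
  then show ?thesis by simp
next
  case False then have "b = 1" using b1 by simp
  then show ?thesis using b2a5 by simp
qed

lemma ab5: "b = 1 \<Longrightarrow> a * b \<ge> 5" using b2a5 by auto

lemma f_base1:
  assumes "b \<ge> 2 \<or> N \<noteq> 1"
  shows "qf a b (rdiff (beta1 a b N) (1,0)) > a"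
proof -
  have p1: "pair1 a b (beta1 a b N) = cseq a b N - cseq a b (Suc (Suc N))"
    by (simp add: pair1_def beta1_def R1)
  define D where "D = cseq a b (Suc (Suc N)) - cseq a b N"
  have f: "qf a b (rdiff (beta1 a b N) (1,0)) = qf a b (beta1 a b N) + b + b * D"
    by (simp add: qf_sub1 p1 D_def algebra_simps)
  show ?thesis
  proof (cases "even N")
    case True
    have "D = a * (ss a b (Suc (Suc N)) - ss a b N)" using True by (simp add: D_def cseq_ss algebra_simps)
    moreover have "ss a b (Suc (Suc N)) - ss a b N \<ge> 1" using ss_D_gen[OF ab4] .
    ultimately have "D \<ge> 0" using a1 by simp
    then have "b * D \<ge> 0" using b1 by simp
    then show ?thesis using f True qf_beta[of a b N] b1 by simp
  next
    case False
    define t where "t = ss a b (Suc N)"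
    have t1: "t \<ge> 1" using ss_pos[OF ab4] by (simp add: t_def)
    have D: "D = a * b * t - 2 * ss a b N" using False by (simp add: D_def cseq_ss t_def)
    have sN: "2 * t \<ge> ss a b N + 1" using ss_odd_step[OF ab4 False] by (simp add: t_def)
    have D2: "D \<ge> (a * b - 4) * t + 2" using D sN by (simp add: algebra_simps)
    have fq: "qf a b (rdiff (beta1 a b N) (1,0)) = 2 * b + b * D" using f False qf_beta[of a b N] by simp
    show ?thesis
    proof (cases "b \<ge> 2")
      case True
      have "(a * b - 4) * t \<ge> (a * b - 4) * 1" using ab4 t1 by (intro mult_left_mono) auto
      then have "D \<ge> a * b - 2" using D2 by simp
      then have X: "b * D \<ge> b * (a * b - 2)" using b1 by (intro mult_left_mono) auto
      have Y: "b * (a * b - 2) = a * b * b - 2 * b" by (simp add: algebra_simps)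
      have Z: "a * b * b \<ge> a * 2 * 2" using True a1 by (intro mult_mono) auto
      show ?thesis using fq X Y Z a1 by linarith
    next
      case b: False
      then have b1': "b = 1" using b1 by simp
      then have N3: "Suc N \<ge> 3" using assms False by (cases N) auto
      have t2: "t \<ge> 2" using ss_ge2[OF ab5[OF b1'] N3] by (simp add: t_def)
      have "(a - 4) * t \<ge> (a - 4) * 2" using t2 b2a5 b1' by (intro mult_left_mono) auto
      then show ?thesis using fq D2 b1' b2a5 by simp
    qed
  qed
qed

lemma f_base2: "qf a b (rdiff (beta2 a b N) (0,1)) > a"
proof -
  have p2: "pair2 a b (beta2 a b N) = dseq a b N - dseq a b (Suc (Suc N))"
    by (simp add: pair2_def beta2_def R2)
  define D where "D = dseq a b (Suc (Suc N)) - dseq a b N"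
  have f: "qf a b (rdiff (beta2 a b N) (0,1)) = qf a b (beta2 a b N) + a + a * D"
    by (simp add: qf_sub2 p2 D_def algebra_simps)
  have e: "ss a b (Suc (Suc N)) - ss a b N \<ge> 1" using ss_D_gen[OF ab4] .
  have "D \<ge> 0"
  proof (cases "even N")
    case True
    then have "D = b * (ss a b (Suc (Suc N)) - ss a b N)" by (simp add: D_def dseq_ss algebra_simps)
    then show ?thesis using e b1 by simp
  next
    case False
    then show ?thesis using e by (simp add: D_def dseq_ss)
  qed
  then have "a * D \<ge> 0" using a1 by simp
  moreover have "qf a b (beta2 a b N) \<ge> 1" using qf_beta[of a b N] a1 b1 by auto
  ultimately show ?thesis using f by simp
qed

lemma key_E:
  assumes p: "even p" and n: "b \<ge> 2 \<or> p \<noteq> 0"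
  shows "a * b * (ss a b (Suc (Suc p)) - ss a b p) \<ge> a + b"
proof -
  define E where "E = ss a b (Suc (Suc p)) - ss a b p"
  show ?thesis
  proof (cases "b \<ge> 2")
    case True
    have "E \<ge> 1" using ss_D_gen[OF ab4] by (simp add: E_def)
    then have "a * b * E \<ge> a * b * 1" using a1 b1 by (intro mult_left_mono) auto
    moreover have "(a - 1) * (b - 1) \<ge> 1 * 1" using True ba by (intro mult_mono) auto
    moreover have "(a - 1) * (b - 1) = a * b - a - b + 1" by (simp add: algebra_simps)
    ultimately show ?thesis unfolding E_def[symmetric] by linarith
  next
    case False
    then have b1': "b = 1" using b1 by simp
    then have "p \<noteq> 0" using n by simp
    then have "p \<ge> 2" using p by presburger
    then have "E \<ge> 2" using ss_D_even[OF ab5[OF b1'] p] by (simp add: E_def)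
    then have "a * E \<ge> a * 2" using a1 by (intro mult_left_mono) auto
    moreover have "a * b * E = a * E" using b1' by simp
    ultimately show ?thesis unfolding E_def[symmetric] using b1' a1 by linarith
  qed
qed

lemma g_base1:
  assumes "b \<ge> 2 \<or> p \<noteq> 0"
  shows "qf a b (rdiff (beta1 a b (Suc p)) (0,1)) \<le> 0"
proof -
  have p2: "pair2 a b (beta1 a b (Suc p)) = dseq a b (Suc (Suc p)) - dseq a b p"
    by (simp add: pair2_def beta1_def R2)
  have f: "qf a b (rdiff (beta1 a b (Suc p)) (0,1)) = qf a b (beta1 a b (Suc p)) + a - a * (dseq a b (Suc (Suc p)) - dseq a b p)"
    using p2 by (simp add: qf_sub2)
  show ?thesis
  proof (cases "even p")
    case False
    have "ss a b (Suc (Suc p)) - ss a b p \<ge> 2" using ss_D_odd[OF ab4 False] .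
    then have "a * (ss a b (Suc (Suc p)) - ss a b p) \<ge> a * 2" using a1 by (intro mult_left_mono) auto
    then show ?thesis using f False qf_beta[of a b "Suc p"] by (simp add: dseq_ss)
  next
    case True
    have "a * b * (ss a b (Suc (Suc p)) - ss a b p) \<ge> a + b" using key_E[OF True assms] .
    then show ?thesis using f True qf_beta[of a b "Suc p"] by (simp add: dseq_ss algebra_simps)
  qed
qed

lemma h_base1:
  assumes "b \<ge> 2 \<or> p \<noteq> 0"
  shows "qf a b (rdiff (beta2 a b (Suc p)) (1,0)) \<le> 0"
proof -
  have p1: "pair1 a b (beta2 a b (Suc p)) = cseq a b (Suc (Suc p)) - cseq a b p"
    by (simp add: pair1_def beta2_def R1)
  have f: "qf a b (rdiff (beta2 a b (Suc p)) (1,0)) = qf a b (beta2 a b (Suc p)) + b - b * (cseq a b (Suc (Suc p)) - cseq a b p)"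
    using p1 by (simp add: qf_sub1)
  show ?thesis
  proof (cases "even p")
    case False
    have "ss a b (Suc (Suc p)) - ss a b p \<ge> 2" using ss_D_odd[OF ab4 False] .
    then have "b * (ss a b (Suc (Suc p)) - ss a b p) \<ge> b * 2" using b1 by (intro mult_left_mono) auto
    then show ?thesis using f False qf_beta[of a b "Suc p"] by (simp add: cseq_ss)
  next
    case True
    have "a * b * (ss a b (Suc (Suc p)) - ss a b p) \<ge> a + b" using key_E[OF True assms] .
    then show ?thesis using f True qf_beta[of a b "Suc p"] by (simp add: cseq_ss algebra_simps)
  qed
qed

end



lemma det2_swap: "det2 x y = - det2 y x" by (simp add: det2_def)

context hyp begin

lemma same_chain_base:
  "rdiff (beta1 a b (Suc p)) (beta1 a b 0) \<in> roots a b \<and> rdiff (beta2 a b (Suc p)) (beta2 a b 0) \<in> roots a b"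
proof (cases "b = 1 \<and> p = 0")
  case True
  have "rdiff (beta1 a b (Suc p)) (beta1 a b 0) = (1,0)"
    using True by (simp add: beta1_def beta1_0 rdiff_def cseq_def dseq_def)
  then have 1: "rdiff (beta1 a b (Suc p)) (beta1 a b 0) \<in> roots a b"
    by (simp add: roots_def real_roots_def worbit.base)
  have "rdiff (beta2 a b (Suc p)) (beta2 a b 0) = beta2 a b 2"
    using True by (simp add: beta2_def beta2_0 rdiff_def cseq_def dseq_def numeral_eq_Suc)
  then have 2: "rdiff (beta2 a b (Suc p)) (beta2 a b 0) \<in> roots a b"
    using beta_real by (simp add: roots_def)
  show ?thesis using 1 2 by simp
next
  case False
  then have c: "b \<ge> 2 \<or> p \<noteq> 0" using b1 by auto
  have n1: "rdiff (beta1 a b (Suc p)) (0,1) \<noteq> (0,0)"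
    using cseq_pos[OF a1 ab4, of "Suc p"] by (auto simp: rdiff_def beta1_def)
  have n2: "rdiff (beta2 a b (Suc p)) (1,0) \<noteq> (0,0)"
    using dseq_pos[OF b1 ab4, of "Suc p"] by (auto simp: rdiff_def beta2_def)
  show ?thesis
    using qf_nonpos_root[OF a1 b1 g_base1[OF c] n1] qf_nonpos_root[OF a1 b1 h_base1[OF c] n2]
    by (simp add: beta1_0 beta2_0)
qed

lemma same_chain_shift:
  "rdiff (beta1 a b (m + Suc p)) (beta1 a b m) \<in> roots a b \<and> rdiff (beta2 a b (m + Suc p)) (beta2 a b m) \<in> roots a b"
proof (induction m)
  case 0 then show ?case using same_chain_base by simp
next
  case (Suc m)
  have "rdiff (beta1 a b (Suc m + Suc p)) (beta1 a b (Suc m)) = refl2 a b (rdiff (beta2 a b (m + Suc p)) (beta2 a b m))"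
    by (simp add: refl2_rdiff beta_r2)
  moreover have "rdiff (beta2 a b (Suc m + Suc p)) (beta2 a b (Suc m)) = refl1 a b (rdiff (beta1 a b (m + Suc p)) (beta1 a b m))"
    by (simp add: refl1_rdiff beta_r1)
  ultimately show ?case using Suc by (simp add: roots_refl1_iff roots_refl2_iff)
qed

lemma same_chain:
  assumes "j \<noteq> j'"
  shows "rdiff (beta1 a b j) (beta1 a b j') \<in> roots a b \<and> rdiff (beta2 a b j) (beta2 a b j') \<in> roots a b"
proof (cases "j' < j")
  case True
  then obtain p where "j = Suc (j' + p)" using less_imp_Suc_add by blast
  then have p: "j = j' + Suc p" by simp
  show ?thesis unfolding p using same_chain_shift[of j' p] .
next
  case False
  then have "j < j'" using assms by simp
  then obtain p where "j' = Suc (j + p)" using less_imp_Suc_add by blast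
  then have p: "j' = j + Suc p" by simp
  have "rdiff (beta1 a b j') (beta1 a b j) \<in> roots a b \<and> rdiff (beta2 a b j') (beta2 a b j) \<in> roots a b"
    unfolding p using same_chain_shift[of j p] .
  then show ?thesis using roots_rneg[of "rdiff (beta1 a b j') (beta1 a b j)" a b]
      roots_rneg[of "rdiff (beta2 a b j') (beta2 a b j)" a b] by (simp only: rneg_rdiff)
qed

lemma M1:
  "qf a b (rdiff (beta1 a b j) (beta2 a b (Suc k))) = qf a b (rdiff (beta1 a b k) (beta2 a b (Suc j)))
   \<and> det2 (beta1 a b j) (beta2 a b (Suc k)) = det2 (beta1 a b k) (beta2 a b (Suc j))"
proof -
  have "qf a b (rdiff (beta1 a b j) (beta2 a b (Suc k))) = qf a b (refl1 a b (rdiff (beta1 a b j) (beta2 a b (Suc k))))"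
    by simp
  also have "\<dots> = qf a b (rdiff (beta2 a b (Suc j)) (beta1 a b k))"
    by (simp only: refl1_rdiff beta_r1 beta_r1')
  finally have 1: "qf a b (rdiff (beta1 a b j) (beta2 a b (Suc k))) = qf a b (rdiff (beta1 a b k) (beta2 a b (Suc j)))"
    using qf_rdiff_swap by metis
  have "det2 (beta1 a b j) (beta2 a b (Suc k)) = - det2 (refl1 a b (beta1 a b j)) (refl1 a b (beta2 a b (Suc k)))"
    by (simp add: det2_refl1)
  also have "\<dots> = det2 (beta1 a b k) (beta2 a b (Suc j))"
    by (simp add: beta_r1 beta_r1' det2_swap[of "beta2 a b (Suc j)"])
  finally show ?thesis using 1 by simp
qed

lemma M2:
  "qf a b (rdiff (beta1 a b (Suc j)) (beta2 a b k)) = qf a b (rdiff (beta1 a b (Suc k)) (beta2 a b j))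
   \<and> det2 (beta1 a b (Suc j)) (beta2 a b k) = det2 (beta1 a b (Suc k)) (beta2 a b j)"
proof -
  have "qf a b (rdiff (beta1 a b (Suc j)) (beta2 a b k)) = qf a b (refl2 a b (rdiff (beta1 a b (Suc j)) (beta2 a b k)))"
    by simp
  also have "\<dots> = qf a b (rdiff (beta2 a b j) (beta1 a b (Suc k)))"
    by (simp only: refl2_rdiff beta_r2 beta_r2')
  finally have 1: "qf a b (rdiff (beta1 a b (Suc j)) (beta2 a b k)) = qf a b (rdiff (beta1 a b (Suc k)) (beta2 a b j))"
    using qf_rdiff_swap by metis
  have "det2 (beta1 a b (Suc j)) (beta2 a b k) = - det2 (refl2 a b (beta1 a b (Suc j))) (refl2 a b (beta2 a b k))"
    by (simp add: det2_refl2)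
  also have "\<dots> = det2 (beta1 a b (Suc k)) (beta2 a b j)"
    by (simp add: beta_r2 beta_r2' det2_swap[of "beta2 a b j"])
  finally show ?thesis using 1 by simp
qed

lemma cross:
  "\<forall>j. ((b \<ge> 2 \<or> (j, k) \<noteq> (1, 0)) \<longrightarrow> qf a b (rdiff (beta1 a b j) (beta2 a b k)) > a)
       \<and> det2 (beta1 a b j) (beta2 a b k) \<noteq> 0"
proof (induction k rule: less_induct)
  case (less k)
  show ?case
  proof (cases k)
    case 0
    have "det2 (beta1 a b j) (beta2 a b 0) \<noteq> 0" for j
      using dseq_pos[OF b1 ab4, of "Suc j"] by (simp add: det2_def beta1_def beta2_0)
    then show ?thesis using f_base1 0 by (simp add: beta2_0)
  next
    case (Suc k')
    show ?thesis
    proof (cases k')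
      case 0
      have "det2 (beta1 a b 0) (beta2 a b (Suc j)) \<noteq> 0" for j
        using cseq_pos[OF a1 ab4, of "Suc (Suc j)"] by (simp add: det2_def beta1_0 beta2_def)
      moreover have "qf a b (rdiff (beta1 a b 0) (beta2 a b (Suc j))) > a" for j
        using f_base2[of "Suc j"] qf_rdiff_swap by (metis beta1_0)
      ultimately show ?thesis using M1 Suc 0 by simp
    next
      case (Suc k'')
      have IH: "((b \<ge> 2 \<or> (Suc (Suc j), k'') \<noteq> (1, 0)) \<longrightarrow> qf a b (rdiff (beta1 a b (Suc (Suc j))) (beta2 a b k'')) > a)
       \<and> det2 (beta1 a b (Suc (Suc j))) (beta2 a b k'') \<noteq> 0" for j
      proof -
        have "k'' < k" using Suc \<open>k = Suc k'\<close> by simp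
        then show ?thesis using less[of k''] by blast
      qed
      have "qf a b (rdiff (beta1 a b j) (beta2 a b k)) = qf a b (rdiff (beta1 a b (Suc (Suc j))) (beta2 a b k''))
        \<and> det2 (beta1 a b j) (beta2 a b k) = det2 (beta1 a b (Suc (Suc j))) (beta2 a b k'')" for j
        using M1[of j "Suc k''"] M2[of k'' "Suc j"] Suc \<open>k = Suc k'\<close> by simp
      then show ?thesis using IH by simp
    qed
  qed
qed

end



lemma subsing: "(\<forall>x\<in>A. \<forall>y\<in>A. x = y) \<Longrightarrow> A = {} \<or> (\<exists>x. A = {x})" by blast

lemma lin_indep2:
  assumes "x \<noteq> y" "det2 x y \<noteq> 0"
  shows "lin_indep {x, y}"
  unfolding lin_indep_def
proof (intro conjI allI impI)
  show "finite {x, y}" by simp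
  fix u :: "rlat \<Rightarrow> real"
  assume h: "(\<Sum>v\<in>{x, y}. u v * real_of_int (fst v)) = 0 \<and> (\<Sum>v\<in>{x, y}. u v * real_of_int (snd v)) = 0"
  define X1 where "X1 = real_of_int (fst x)"
  define X2 where "X2 = real_of_int (snd x)"
  define Y1 where "Y1 = real_of_int (fst y)"
  define Y2 where "Y2 = real_of_int (snd y)"
  have e1: "u x * X1 + u y * Y1 = 0" and e2: "u x * X2 + u y * Y2 = 0"
    using h assms(1) by (simp_all add: X1_def X2_def Y1_def Y2_def)
  have d: "X1 * Y2 - X2 * Y1 \<noteq> 0"
  proof -
    have "real_of_int (det2 x y) = X1 * Y2 - X2 * Y1" by (simp add: det2_def X1_def X2_def Y1_def Y2_def)
    then show ?thesis using assms(2) by (metis of_int_eq_0_iff)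
  qed
  have "u x * (X1 * Y2 - X2 * Y1) = (u x * X1 + u y * Y1) * Y2 - (u x * X2 + u y * Y2) * Y1"
    by (simp add: algebra_simps)
  then have ux: "u x = 0" using e1 e2 d by simp
  have "u y * (X1 * Y2 - X2 * Y1) = (u x * X2 + u y * Y2) * X1 - (u x * X1 + u y * Y1) * X2"
    by (simp add: algebra_simps)
  then have uy: "u y = 0" using e1 e2 d by simp
  show "\<forall>v\<in>{x, y}. u v = 0" using ux uy by simp
qed

context hyp begin

lemma pi_ok:
  assumes "b \<ge> 2 \<or> (j, k) \<noteq> (1, 0)"
  shows "pi_system a b {beta1 a b j, beta2 a b k}"
  unfolding pi_system_def
proof (intro conjI ballI)
  show "{beta1 a b j, beta2 a b k} \<subseteq> real_roots a b" using beta_real by simp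
  have q: "qf a b (rdiff (beta1 a b j) (beta2 a b k)) > a" using cross assms by blast
  have nr: "z \<notin> roots a b" if "qf a b z > a" for z
    using roots_props[of a b z] a1 b1 ba that by auto
  have n0: "(0,0) \<notin> roots a b" using roots_props[of a b "(0,0)"] a1 b1 by auto
  fix x y assume xy: "x \<in> {beta1 a b j, beta2 a b k}" "y \<in> {beta1 a b j, beta2 a b k}"
  show "rdiff x y \<notin> roots a b"
  proof (cases "x = y")
    case True then show ?thesis using n0 by (simp add: rdiff_def)
  next
    case False
    then have "(x = beta1 a b j \<and> y = beta2 a b k) \<or> (x = beta2 a b k \<and> y = beta1 a b j)" using xy by auto
    then show ?thesis using nr q qf_rdiff_swap by metis
  qed
qed

end

theorem theorem3p1:
  fixes a b :: int
  assumes "b \<ge> 1" and "a \<ge> b" and "b \<ge> 2 \<or> (b = 1 \<and> a \<ge> 5)"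
  shows "(\<forall>\<Sigma>. \<Sigma> \<subseteq> pos_real_roots a b \<and> pi_system a b \<Sigma> \<longrightarrow>
            finite \<Sigma> \<and> card \<Sigma> \<le> 2 \<and>
            (card \<Sigma> = 2 \<longrightarrow> (\<exists>j k. \<Sigma> = {beta1 a b j, beta2 a b k}) \<and> lin_indep \<Sigma>))
       \<and> (b \<ge> 2 \<longrightarrow> (\<forall>j k. pi_system a b {beta1 a b j, beta2 a b k}))
       \<and> (b = 1 \<and> a \<ge> 5 \<longrightarrow>
            (\<forall>j k. pi_system a b {beta1 a b j, beta2 a b k} \<longleftrightarrow> (j, k) \<noteq> (1, 0)))"
proof -
  interpret hyp a b
    using assms by unfold_locales auto
  have P1: "finite S \<and> card S \<le> 2 \<and>
            (card S = 2 \<longrightarrow> (\<exists>j k. S = {beta1 a b j, beta2 a b k}) \<and> lin_indep S)"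
    if S: "S \<subseteq> pos_real_roots a b" "pi_system a b S" for S
  proof -
    define A where "A = S \<inter> range (beta1 a b)"
    define B where "B = S \<inter> range (beta2 a b)"
    have SAB: "S = A \<union> B"
    proof
      show "S \<subseteq> A \<union> B"
      proof
        fix x assume "x \<in> S"
        then obtain j where "x = beta1 a b j \<or> x = beta2 a b j"
          using pos_real_char[OF a1 b1 ab4] S(1) by blast
        then show "x \<in> A \<union> B" using \<open>x \<in> S\<close> by (auto simp: A_def B_def)
      qed
    qed (auto simp: A_def B_def)
    have nd: "rdiff x y \<notin> roots a b" if "x \<in> S" "y \<in> S" for x y
      using S(2) that by (auto simp: pi_system_def)
    have "\<forall>x\<in>A. \<forall>y\<in>A. x = y"
    proof (intro ballI)
      fix x y assume "x \<in> A" "y \<in> A"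
      then obtain j j' where x: "x = beta1 a b j" "x \<in> S" and y: "y = beta1 a b j'" "y \<in> S"
        by (auto simp: A_def)
      show "x = y"
      proof (rule ccontr)
        assume "x \<noteq> y" then have "j \<noteq> j'" using x y by auto
        then show False using same_chain[of j j'] nd[OF x(2) y(2)] x y by simp
      qed
    qed
    then have A: "A = {} \<or> (\<exists>x. A = {x})" by (rule subsing)
    have "\<forall>x\<in>B. \<forall>y\<in>B. x = y"
    proof (intro ballI)
      fix x y assume "x \<in> B" "y \<in> B"
      then obtain j j' where x: "x = beta2 a b j" "x \<in> S" and y: "y = beta2 a b j'" "y \<in> S"
        by (auto simp: B_def)
      show "x = y"
      proof (rule ccontr)
        assume "x \<noteq> y" then have "j \<noteq> j'" using x y by auto
        then show False using same_chain[of j j'] nd[OF x(2) y(2)] x y by simp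
      qed
    qed
    then have B: "B = {} \<or> (\<exists>x. B = {x})" by (rule subsing)
    have fin: "finite S" using A B SAB by auto
    have cA: "card A \<le> 1" using A by auto
    have cB: "card B \<le> 1" using B by auto
    have c2: "card S \<le> 2" using card_Un_le[of A B] SAB cA cB by simp
    have c3: "(\<exists>j k. S = {beta1 a b j, beta2 a b k}) \<and> lin_indep S" if "card S = 2"
    proof -
      have "A \<noteq> {}"
      proof
        assume "A = {}" then have "S = B" using SAB by simp
        then show False using cB that by simp
      qed
      then obtain x where Ax: "A = {x}" using A by blast
      have "B \<noteq> {}"
      proof
        assume "B = {}" then have "S = A" using SAB by simp
        then show False using cA that by simp
      qed
      then obtain y where By: "B = {y}" using B by blast
      have Sxy: "S = {x, y}" using Ax By SAB by auto
      have xy: "x \<noteq> y" using Sxy that by auto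
      have "x \<in> range (beta1 a b)" "y \<in> range (beta2 a b)" using Ax By unfolding A_def B_def by blast+
      then obtain j k where j: "x = beta1 a b j" and k: "y = beta2 a b k" by blast
      have "det2 x y \<noteq> 0" using cross j k by blast
      then show ?thesis using lin_indep2[OF xy] Sxy j k by blast
    qed
    show ?thesis using fin c2 c3 by blast
  qed
  have P2: "b \<ge> 2 \<longrightarrow> (\<forall>j k. pi_system a b {beta1 a b j, beta2 a b k})"
    using pi_ok by blast
  have P3: "pi_system a b {beta1 a b j, beta2 a b k} \<longleftrightarrow> (j, k) \<noteq> (1, 0)" if b: "b = 1" for j k
  proof
    assume pi: "pi_system a b {beta1 a b j, beta2 a b k}"
    show "(j, k) \<noteq> (1, 0)"
    proof
      assume jk: "(j, k) = (1, 0)"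
      have "rdiff (beta1 a b j) (beta2 a b k) = (0,1)"
        using jk b by (simp add: beta1_def beta2_def rdiff_def cseq_def dseq_def)
      moreover have "(0,1) \<in> roots a b" by (simp add: roots_def real_roots_def worbit.base)
      ultimately show False using pi by (auto simp: pi_system_def)
    qed
  next
    assume "(j, k) \<noteq> (1, 0)" then show "pi_system a b {beta1 a b j, beta2 a b k}" using pi_ok by blast
  qed
  show ?thesis using P1 P2 P3 by blast
qed


end
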